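(* Let $d\ge 2$, $m>1$, $0\le s\le m-1$ and $t$ be integers with $\gcd(d,t)=1$ and $ds\equiv -t\pmod m$, and let $a$ be an indeterminate. Then for $0\le k\le s$, \[ \frac{(aq^t;q^d)_{s-k}}{(q^d/a;q^d)_{s-k}}\equiv (-a)^{s-2k}q^{s(ds-d+2t)/2+(d-t)k}\frac{(aq^t;q^d)_k}{(q^d/a;q^d)_k}\pmod{\Phi_m(q)}. \]
   Context: For an indeterminate $q$, $(x;q)_k=(1-x)(1-xq)\cdots(1-xq^{k-1})$ (with $(x;q)_0=1$). $\Phi_m(q)$ is the $m$-th cyclotomic polynomial in $q$. A congruence $A\equiv B\pmod{\Phi_m(q)}$ between rational functions in $q$ and $a$ means that $A-B$, written as a quotient of polynomials with denominator coprime to $\Phi_m(q)$, has numerator divisible by $\Phi_m(q)$. *)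

theory Defs
  imports Complex_Main "HOL-Computational_Algebra.Computational_Algebra" "HOL-Number_Theory.Cong"
begin

text \<open>The outer polynomial variable is q, the inner (coefficient) variable is a.\<close>
type_synonym ratfun = "complex poly poly fract"

definition cyclo :: "nat \<Rightarrow> complex poly" where
  "cyclo m = (\<Prod>k\<in>{k. k < m \<and> coprime k m}. [:- cis (2 * pi * real k / real m), 1:])"

definition cycloQ :: "nat \<Rightarrow> complex poly poly" where
  "cycloQ m = map_poly (\<lambda>c. [:c:]) (cyclo m)"

definition qvar :: ratfun where "qvar = Fract [:0, 1:] 1"
definition avar :: ratfun where "avar = Fract [:[:0, 1:]:] 1"

definition qpoch :: "ratfun \<Rightarrow> ratfun \<Rightarrow> nat \<Rightarrow> ratfun" where
  "qpoch x b n = (\<Prod>j<n. 1 - x * b ^ j)"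

definition cong_cyclo :: "ratfun \<Rightarrow> ratfun \<Rightarrow> nat \<Rightarrow> bool" where
  "cong_cyclo A B m \<longleftrightarrow>
     (\<exists>N D. D \<noteq> 0 \<and> A - B = Fract N D \<and> coprime D (cycloQ m) \<and> cycloQ m dvd N)"

end

theory Submission
  imports Defs
begin

definition qp :: "'a::comm_ring_1 \<Rightarrow> 'a \<Rightarrow> nat \<Rightarrow> 'a" where
  "qp x b n = (\<Prod>j<n. 1 - x * b ^ j)"

lemma qp_0[simp]: "qp x b 0 = 1" by (simp add: qp_def)
lemma qp_Suc: "qp x b (Suc n) = qp x b n * (1 - x * b ^ n)" by (simp add: qp_def)

lemma fac_ident:
  fixes \<beta> u v :: "'a::field"
  assumes "u * v = 1" "\<beta> \<noteq> 0"
  shows "1 - \<beta> * v ^ j = (- \<beta> * v ^ j) * (1 - u ^ j / \<beta>)"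
proof -
  have "v ^ j * u ^ j = 1" using assms(1) by (metis power_mult_distrib mult.commute power_one)
  thus ?thesis using assms(2) by (simp add: field_simps)
qed

lemma qp_den_nz:
  fixes \<beta> u :: "'a::field"
  assumes "\<beta> \<noteq> 0" "\<forall>j. \<beta> \<noteq> u ^ j"
  shows "qp (u / \<beta>) u n \<noteq> 0"
proof -
  have "1 - u / \<beta> * u ^ j \<noteq> 0" for j
  proof
    assume "1 - u / \<beta> * u ^ j = 0"
    hence "\<beta> = u ^ Suc j" using assms(1) by (simp add: field_simps)
    thus False using assms(2) by blast
  qed
  thus ?thesis unfolding qp_def by (subst prod_zero_iff) auto
qed

lemma base_L:
  fixes \<beta> u v :: "'a::field"
  assumes uv: "u * v = 1" and b0: "\<beta> \<noteq> 0"
  shows "(\<Prod>j<n. 1 - \<beta> * v ^ Suc j) = (- \<beta>) ^ n * v ^ (\<Sum>j<n. Suc j) * qp (u / \<beta>) u n"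
proof (induction n)
  case 0 then show ?case by simp
next
  case (Suc n)
  have "(\<Prod>j<Suc n. 1 - \<beta> * v ^ Suc j) = (\<Prod>j<n. 1 - \<beta> * v ^ Suc j) * (1 - \<beta> * v ^ Suc n)" by simp
  also have "\<dots> = (- \<beta>) ^ n * v ^ (\<Sum>j<n. Suc j) * qp (u / \<beta>) u n * ((- \<beta> * v ^ Suc n) * (1 - u ^ Suc n / \<beta>))"
    by (simp only: Suc.IH fac_ident[OF uv b0, of "Suc n"])
  also have "\<dots> = (- \<beta>) ^ Suc n * v ^ (\<Sum>j<Suc n. Suc j) * qp (u / \<beta>) u (Suc n)"
    by (simp add: qp_Suc power_add field_simps)
  finally show ?case .
qed

lemma num_factor:
  fixes \<beta> u v :: "'a::field"
  assumes uv: "u * v = 1" and "j \<le> s"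
  shows "\<beta> * v ^ s * u ^ j = \<beta> * v ^ (s - j)"
proof -
  have "v ^ s = v ^ (s - j) * v ^ j" using assms(2) by (simp add: power_add[symmetric])
  moreover have "v ^ j * u ^ j = 1" using uv by (metis power_mult_distrib mult.commute power_one)
  ultimately show ?thesis by (simp add: field_simps)
qed

lemma L_s:
  fixes \<beta> u v :: "'a::field"
  assumes uv: "u * v = 1" and b0: "\<beta> \<noteq> 0"
  shows "qp (\<beta> * v ^ s) u s = (- \<beta>) ^ s * v ^ (\<Sum>j<s. Suc j) * qp (u / \<beta>) u s"
proof -
  have "qp (\<beta> * v ^ s) u s = (\<Prod>j<s. 1 - \<beta> * v ^ (s - j))"
    unfolding qp_def by (rule prod.cong) (auto simp: num_factor[OF uv])
  also have "\<dots> = (\<Prod>j<s. 1 - \<beta> * v ^ (s - (s - Suc j)))"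
    by (rule prod.nat_diff_reindex[symmetric])
  also have "\<dots> = (\<Prod>j<s. 1 - \<beta> * v ^ Suc j)"
    by (rule prod.cong) (auto simp: Suc_diff_Suc)
  finally show ?thesis using base_L[OF uv b0] by simp
qed


lemma step_alg:
  fixes B Q U X Y a1 a2 Nn Dn Nk Dk \<beta> :: "'a::field"
  assumes IH: "B * ((Nn * (- \<beta> * X * a1)) / (Dn * a2)) = Q * (Nk / Dk)"
    and XY: "X * Y * U = 1" and nz: "a1 \<noteq> 0" "a2 \<noteq> 0" "Dn \<noteq> 0" "Dk \<noteq> 0" "\<beta> \<noteq> 0"
  shows "B * \<beta> ^ 2 * (Nn / Dn) = Q * U * ((Nk * (- \<beta> * Y * a2)) / (Dk * a1))"
proof -
  have "Q * U * ((Nk * (- \<beta> * Y * a2)) / (Dk * a1)) = (Q * (Nk / Dk)) * U * (- \<beta> * Y * a2) / a1"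
    using nz by (simp add: field_simps)
  also have "\<dots> = B * ((Nn * (- \<beta> * X * a1)) / (Dn * a2)) * U * (- \<beta> * Y * a2) / a1"
    by (simp only: IH)
  also have "\<dots> = B * \<beta> ^ 2 * (Nn / Dn) * (X * Y * U)"
    using nz by (simp add: field_simps power2_eq_square)
  finally show ?thesis using XY by simp
qed

lemma D_Suc:
  fixes \<beta> u :: "'a::field"
  shows "qp (u / \<beta>) u (Suc n) = qp (u / \<beta>) u n * (1 - u ^ Suc n / \<beta>)"
  by (simp add: qp_Suc field_simps)

lemma N_Suc:
  fixes \<beta> u v :: "'a::field"
  assumes "u * v = 1" "n < s"
  shows "qp (\<beta> * v ^ s) u (Suc n) = qp (\<beta> * v ^ s) u n * (1 - \<beta> * v ^ (s - n))"
  using num_factor[OF assms(1), of n s \<beta>] assms(2) by (simp add: qp_Suc)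

lemma main_L:
  fixes \<beta> u v :: "'a::field"
  assumes uv: "u * v = 1" and b0: "\<beta> \<noteq> 0" and bu: "\<forall>j. \<beta> \<noteq> u ^ j"
  shows "k \<le> s \<Longrightarrow> \<beta> ^ (2 * k) * (qp (\<beta> * v ^ s) u (s - k) / qp (u / \<beta>) u (s - k))
     = (- \<beta>) ^ s * v ^ (\<Sum>j<s. Suc j) * u ^ (k * (s + 1)) * (qp (\<beta> * v ^ s) u k / qp (u / \<beta>) u k)"
proof (induction k)
  case 0
  then show ?case using L_s[OF uv b0, of s] qp_den_nz[OF b0 bu, of s] by simp
next
  case (Suc k)
  define n where "n = s - Suc k"
  have sk: "s - k = Suc n" using Suc.prems n_def by simp
  have sn: "s - n = Suc k" using Suc.prems n_def by simp
  have nz1: "1 - u ^ j / \<beta> \<noteq> 0" for j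
  proof
    assume "1 - u ^ j / \<beta> = 0" then have "\<beta> = u ^ j" using b0 by (simp add: field_simps)
    then show False using bu by blast
  qed
  have IH: "\<beta> ^ (2 * k) * ((qp (\<beta> * v ^ s) u n * (- \<beta> * v ^ Suc k * (1 - u ^ Suc k / \<beta>))) / (qp (u / \<beta>) u n * (1 - u ^ (s - k) / \<beta>)))
     = (- \<beta>) ^ s * v ^ (\<Sum>j<s. Suc j) * u ^ (k * (s + 1)) * (qp (\<beta> * v ^ s) u k / qp (u / \<beta>) u k)"
    using Suc.IH Suc.prems N_Suc[OF uv, of n s \<beta>] D_Suc[of u \<beta> n] fac_ident[OF uv b0, of "Suc k"]
    by (simp add: sk sn n_def)
  have XY: "v ^ Suc k * v ^ (s - k) * u ^ (s + 1) = 1"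
  proof -
    have "v ^ Suc k * v ^ (s - k) = v ^ (s + 1)" using Suc.prems by (simp add: power_add[symmetric])
    moreover have "v ^ (s+1) * u ^ (s + 1) = 1" using uv by (metis power_mult_distrib mult.commute power_one)
    ultimately show ?thesis by metis
  qed
  have "\<beta> ^ (2 * k) * \<beta> ^ 2 * (qp (\<beta> * v ^ s) u n / qp (u / \<beta>) u n)
     = ((- \<beta>) ^ s * v ^ (\<Sum>j<s. Suc j) * u ^ (k * (s + 1))) * u ^ (s + 1) *
       ((qp (\<beta> * v ^ s) u k * (- \<beta> * v ^ (s - k) * (1 - u ^ (s - k) / \<beta>))) / (qp (u / \<beta>) u k * (1 - u ^ Suc k / \<beta>)))"
    by (rule step_alg[OF _ XY nz1 nz1 qp_den_nz[OF b0 bu] qp_den_nz[OF b0 bu] b0]) (use IH in \<open>simp add: mult.assoc\<close>)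
  moreover have "qp (\<beta> * v ^ s) u (Suc k) = qp (\<beta> * v ^ s) u k * (- \<beta> * v ^ (s - k) * (1 - u ^ (s - k) / \<beta>))"
    using N_Suc[OF uv, of k s \<beta>] Suc.prems fac_ident[OF uv b0, of "s - k"] by simp
  moreover have "qp (u / \<beta>) u (Suc k) = qp (u / \<beta>) u k * (1 - u ^ Suc k / \<beta>)" by (rule D_Suc)
  ultimately show ?case
    by (simp add: n_def power_add power_mult_distrib mult_ac power2_eq_square)
qed


lemma gauss_h: "2 * (\<Sum>j<s. Suc j) = s * (s + 1)"
  by (induction s) auto

lemma field_main:
  fixes w \<beta> :: "'a::field" and d t :: int and m s k :: nat
  assumes w0: "w \<noteq> 0" and wm: "w ^ m = 1" and b0: "\<beta> \<noteq> 0" and bw: "\<forall>i::int. \<beta> \<noteq> w powi i"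
    and cg: "[d * int s = - t] (mod int m)" and ks: "k \<le> s"
  shows "qp (\<beta> * w powi t) (w powi d) (s - k) / qp (w powi d / \<beta>) (w powi d) (s - k)
     = (- \<beta>) powi (int s - 2 * int k) * w powi (int s * (d * int s - d + 2 * t) div 2 + (d - t) * int k)
       * (qp (\<beta> * w powi t) (w powi d) k / qp (w powi d / \<beta>) (w powi d) k)"
proof -
  from cg have "int m dvd d * int s + t" by (simp add: cong_iff_dvd_diff)
  then obtain c where c: "d * int s + t = int m * c" by (elim dvdE)
  hence tc: "t = int m * c - d * int s" by simp
  define u where "u = w powi d"
  define v where "v = inverse u"
  define h where "h = (\<Sum>j<s. Suc j)"
  have u0: "u \<noteq> 0" using w0 by (simp add: u_def)
  have uv: "u * v = 1" using u0 by (simp add: v_def)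
  have h2: "2 * int h = int s * (int s + 1)" using gauss_h[of s] unfolding h_def by (metis of_nat_1 of_nat_add of_nat_mult of_nat_numeral)
  have wm1: "w powi int m = 1" using wm by simp
  have wt: "w powi t = v ^ s"
  proof -
    have "w powi t = w powi (int m * c + (- (d * int s)))" by (simp add: tc)
    also have "\<dots> = w powi (int m * c) * w powi (- (d * int s))"
      by (rule power_int_add) (simp add: w0)
    also have "w powi (int m * c) = 1" by (simp add: power_int_mult wm)
    also have "w powi (- (d * int s)) = u powi (- int s)"
      by (simp add: u_def power_int_mult[symmetric])
    also have "\<dots> = v ^ s" by (simp add: power_int_minus v_def power_inverse)
    finally show ?thesis by simp
  qed
  have bu: "\<forall>j. \<beta> \<noteq> u ^ j" using bw by (simp add: u_def power_int_power')
  have E: "int s * (d * int s - d + 2 * t) div 2 + (d - t) * int k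
        = d * (int (k * (s + 1)) - int h) + int m * (c * (int s - int k))"
  proof -
    have "int s * (d * int s - d + 2 * t) = 2 * (int m * c * int s - d * int h)"
      using h2 by (simp add: tc algebra_simps)
    hence "int s * (d * int s - d + 2 * t) div 2 = int m * c * int s - d * int h" by simp
    thus ?thesis by (simp add: tc algebra_simps)
  qed
  have wE: "w powi (int s * (d * int s - d + 2 * t) div 2 + (d - t) * int k) = u ^ (k * (s + 1)) * v ^ h"
  proof -
    have "w powi (d * (int (k * (s + 1)) - int h) + int m * (c * (int s - int k)))
        = u powi (int (k * (s + 1)) - int h) * (w powi int m) powi (c * (int s - int k))"
      using w0 by (simp add: power_int_add power_int_mult u_def)
    also have "\<dots> = u ^ (k * (s + 1)) * v ^ h"
    proof -
      have "u powi (int (k * (s + 1)) - int h) = u ^ (k * (s + 1)) / u ^ h"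
        by (subst power_int_diff, simp add: u0, simp only: power_int_of_nat)
      moreover have "(w powi int m) powi (c * (int s - int k)) = 1" by (simp add: wm)
      ultimately show ?thesis by (simp add: v_def power_inverse field_simps)
    qed
    finally show ?thesis using E by simp
  qed
  have bp: "(- \<beta>) powi (int s - 2 * int k) = (- \<beta>) ^ s / \<beta> ^ (2 * k)"
  proof -
    have "(- \<beta>) powi (int s - 2 * int k) = (- \<beta>) powi (int s - int (2 * k))" by simp
    also have "\<dots> = (- \<beta>) ^ s / (- \<beta>) ^ (2 * k)"
      by (subst power_int_diff, simp add: b0, simp only: power_int_of_nat)
    also have "(- \<beta>) ^ (2 * k) = \<beta> ^ (2 * k)" by (simp add: power_mult)
    finally show ?thesis .
  qed
  have L: "\<beta> ^ (2 * k) * (qp (\<beta> * v ^ s) u (s - k) / qp (u / \<beta>) u (s - k))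
     = (- \<beta>) ^ s * v ^ h * u ^ (k * (s + 1)) * (qp (\<beta> * v ^ s) u k / qp (u / \<beta>) u k)"
    using main_L[OF uv b0 bu ks] unfolding h_def .
  have bk: "\<beta> ^ (2 * k) \<noteq> 0" using b0 by simp
  define Lk where "Lk = qp (\<beta> * v ^ s) u k / qp (u / \<beta>) u k"
  define Lsk where "Lsk = qp (\<beta> * v ^ s) u (s - k) / qp (u / \<beta>) u (s - k)"
  have L': "\<beta> ^ (2 * k) * Lsk = (- \<beta>) ^ s * v ^ h * u ^ (k * (s + 1)) * Lk"
    using L unfolding Lk_def Lsk_def .
  have "Lsk = (- \<beta>) ^ s / \<beta> ^ (2 * k) * (u ^ (k * (s + 1)) * v ^ h) * Lk"
    using L' bk by (simp add: field_simps)
  then show ?thesis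
    unfolding wE bp wt u_def[symmetric] Lk_def Lsk_def .
qed


section \<open>Evaluation framework\<close>

definition ev :: "complex \<Rightarrow> complex poly poly \<Rightarrow> complex poly" where
  "ev z p = poly p [:z:]"

definition hv :: "complex set \<Rightarrow> ratfun \<Rightarrow> (complex \<Rightarrow> complex poly fract) \<Rightarrow> bool" where
  "hv P x V \<longleftrightarrow> (\<exists>N D. D \<noteq> 0 \<and> x = Fract N D \<and>
      (\<forall>z\<in>P. ev z D \<noteq> 0 \<and> V z = Fract (ev z N) (ev z D)))"

lemma ev_simps[simp]: "ev z (p * q) = ev z p * ev z q" "ev z (p + q) = ev z p + ev z q"
  "ev z (p - q) = ev z p - ev z q" "ev z (- p) = - ev z p" "ev z 1 = 1" "ev z 0 = 0"
  by (simp_all add: ev_def)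

lemma hv_cong: "hv P x V \<Longrightarrow> (\<And>z. z \<in> P \<Longrightarrow> V z = W z) \<Longrightarrow> hv P x W"
  unfolding hv_def by metis

lemma hv_const: "hv P (Fract N 1) (\<lambda>z. Fract (ev z N) 1)"
  unfolding hv_def by (rule exI[of _ N], rule exI[of _ 1]) simp

lemma hv_one: "hv P 1 (\<lambda>z. 1)"
  using hv_const[of P 1] by (simp add: One_fract_def)

lemma hv_add: assumes "hv P x X" "hv P y Y" shows "hv P (x + y) (\<lambda>z. X z + Y z)"
proof -
  from assms(1) obtain N1 D1 where 1: "D1 \<noteq> 0" "x = Fract N1 D1" "\<forall>z\<in>P. ev z D1 \<noteq> 0 \<and> X z = Fract (ev z N1) (ev z D1)"
    unfolding hv_def by blast
  from assms(2) obtain N2 D2 where 2: "D2 \<noteq> 0" "y = Fract N2 D2" "\<forall>z\<in>P. ev z D2 \<noteq> 0 \<and> Y z = Fract (ev z N2) (ev z D2)"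
    unfolding hv_def by blast
  show ?thesis unfolding hv_def
    by (rule exI[of _ "N1 * D2 + N2 * D1"], rule exI[of _ "D1 * D2"]) (use 1 2 in auto)
qed

lemma hv_mult: assumes "hv P x X" "hv P y Y" shows "hv P (x * y) (\<lambda>z. X z * Y z)"
proof -
  from assms(1) obtain N1 D1 where 1: "D1 \<noteq> 0" "x = Fract N1 D1" "\<forall>z\<in>P. ev z D1 \<noteq> 0 \<and> X z = Fract (ev z N1) (ev z D1)"
    unfolding hv_def by blast
  from assms(2) obtain N2 D2 where 2: "D2 \<noteq> 0" "y = Fract N2 D2" "\<forall>z\<in>P. ev z D2 \<noteq> 0 \<and> Y z = Fract (ev z N2) (ev z D2)"
    unfolding hv_def by blast
  show ?thesis unfolding hv_def
    by (rule exI[of _ "N1 * N2"], rule exI[of _ "D1 * D2"]) (use 1 2 in auto)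
qed

lemma hv_minus: assumes "hv P x X" shows "hv P (- x) (\<lambda>z. - X z)"
proof -
  from assms(1) obtain N1 D1 where 1: "D1 \<noteq> 0" "x = Fract N1 D1" "\<forall>z\<in>P. ev z D1 \<noteq> 0 \<and> X z = Fract (ev z N1) (ev z D1)"
    unfolding hv_def by blast
  show ?thesis unfolding hv_def
    by (rule exI[of _ "- N1"], rule exI[of _ "D1"]) (use 1 in auto)
qed

lemma hv_diff: assumes "hv P x X" "hv P y Y" shows "hv P (x - y) (\<lambda>z. X z - Y z)"
  using hv_add[OF assms(1) hv_minus[OF assms(2)]] by simp

lemma Fract_0_left[simp]: "Fract 0 b = (0::'a::idom fract)"
proof -
  have "Fract 0 b = Fract (0::'a) 1"
    by (cases "b = 0") (simp only: eq_fract(2), simp add: eq_fract(1))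
  then show ?thesis by (simp only: Zero_fract_def[symmetric])
qed

lemma Fract_eq_0_iff: "b \<noteq> 0 \<Longrightarrow> Fract a b = (0::'a::idom fract) \<longleftrightarrow> a = 0"
  by (metis Zero_fract_def eq_fract(1) mult_1_right mult_zero_left one_neq_zero)

lemma hv_inverse: assumes "hv P x X" "\<forall>z\<in>P. X z \<noteq> 0" shows "hv P (inverse x) (\<lambda>z. inverse (X z))"
proof -
  from assms(1) obtain N1 D1 where 1: "D1 \<noteq> 0" "x = Fract N1 D1" "\<forall>z\<in>P. ev z D1 \<noteq> 0 \<and> X z = Fract (ev z N1) (ev z D1)"
    unfolding hv_def by blast
  show ?thesis
  proof (cases "N1 = 0")
    case True
    then have "P = {}" using 1 assms(2) by (auto simp: eq_fract)
    then show ?thesis unfolding hv_def using 1 True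
      by (intro exI[of _ 0] exI[of _ 1]) (simp add: eq_fract(2))
  next
    case False
    have "\<forall>z\<in>P. ev z N1 \<noteq> 0" using 1 assms(2) by (auto simp: Fract_eq_0_iff)
    then show ?thesis unfolding hv_def
      by (intro exI[of _ "D1"] exI[of _ "N1"]) (use 1 False in auto)
  qed
qed

lemma hv_divide: assumes "hv P x X" "hv P y Y" "\<forall>z\<in>P. Y z \<noteq> 0" shows "hv P (x / y) (\<lambda>z. X z / Y z)"
  using hv_mult[OF assms(1) hv_inverse[OF assms(2,3)]] by (simp add: divide_inverse)

lemma hv_power: assumes "hv P x X" shows "hv P (x ^ n) (\<lambda>z. X z ^ n)"
  by (induction n) (simp_all add: hv_one hv_mult[OF assms])

lemma hv_powi: assumes "hv P x X" "\<forall>z\<in>P. X z \<noteq> 0" shows "hv P (x powi i) (\<lambda>z. X z powi i)"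
  unfolding power_int_def
  using hv_power[OF assms(1)] hv_power[OF hv_inverse[OF assms]]
  by (cases "0 \<le> i") auto

lemma hv_qp: assumes "hv P x X" "hv P b B" shows "hv P (qp x b n) (\<lambda>z. qp (X z) (B z) n)"
proof (induction n)
  case 0 then show ?case using hv_one by simp
next
  case (Suc n)
  show ?case unfolding qp_Suc
    by (rule hv_mult[OF Suc hv_diff[OF hv_one hv_mult[OF assms(1) hv_power[OF assms(2)]]]])
qed


lemma dvd_prod_roots:
  fixes c :: "'b \<Rightarrow> 'a::idom"
  assumes "finite K" "inj_on c K" "\<forall>k\<in>K. poly N (c k) = 0"
  shows "(\<Prod>k\<in>K. [:- c k, 1:]) dvd N"
  using assms
proof (induction K arbitrary: N rule: finite_induct)
  case empty then show ?case by simp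
next
  case (insert k K)
  from insert.prems have "poly N (c k) = 0" by simp
  then obtain N1 where N1: "N = [:- c k, 1:] * N1" by (auto simp: poly_eq_0_iff_dvd elim: dvdE)
  have "\<forall>j\<in>K. poly N1 (c j) = 0"
  proof
    fix j assume j: "j \<in> K"
    have "c j \<noteq> c k" using insert.prems(1) insert.hyps(2) j unfolding inj_on_def by blast
    moreover have "poly N (c j) = (c j - c k) * poly N1 (c j)" by (simp only: N1 poly_mult) simp
    moreover have "poly N (c j) = 0" using insert.prems(2) j by simp
    ultimately show "poly N1 (c j) = 0" by (metis mult_eq_0_iff right_minus_eq)
  qed
  then have "(\<Prod>k\<in>K. [:- c k, 1:]) dvd N1" using insert.IH insert.prems(1) by auto
  then show ?case unfolding N1 prod.insert[OF insert.hyps] by (rule mult_dvd_mono[OF dvd_refl])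
qed

lemma dvd_linear_cancel:
  fixes g P :: "'a::idom poly"
  assumes "g dvd [:- c, 1:] * P" "poly g c \<noteq> 0"
  shows "g dvd P"
proof -
  from assms(1) obtain r where r: "[:- c, 1:] * P = g * r" by (elim dvdE)
  have "poly g c * poly r c = 0" using arg_cong[OF r, of "\<lambda>p. poly p c"] by simp
  hence "poly r c = 0" using assms(2) by simp
  then obtain r' where r': "r = [:- c, 1:] * r'" by (auto simp: poly_eq_0_iff_dvd elim: dvdE)
  have "[:- c, 1:] * P = [:- c, 1:] * (g * r')" using r r' by (metis mult.left_commute)
  hence "P = g * r'" by (subst (asm) mult_cancel_left) simp
  thus ?thesis by simp
qed

lemma coprime_prod_roots:
  fixes c :: "'b \<Rightarrow> 'a::idom_divide"
  assumes "finite K" "\<forall>k\<in>K. poly D (c k) \<noteq> 0"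
  shows "coprime D (\<Prod>k\<in>K. [:- c k, 1:])"
proof (rule coprimeI)
  fix g assume gD: "g dvd D" and gP: "g dvd (\<Prod>k\<in>K. [:- c k, 1:])"
  have gc: "poly g (c k) \<noteq> 0" if "k \<in> K" for k
  proof
    assume "poly g (c k) = 0"
    hence "[:- c k, 1:] dvd g" by (simp add: poly_eq_0_iff_dvd)
    hence "[:- c k, 1:] dvd D" using gD by (rule dvd_trans)
    thus False using assms(2) that by (simp add: poly_eq_0_iff_dvd)
  qed
  show "is_unit g" using assms(1) gP gc
  proof (induction K rule: finite_induct)
    case empty then show ?case by simp
  next
    case (insert k K)
    have "g dvd [:- c k, 1:] * (\<Prod>k\<in>K. [:- c k, 1:])" using insert.prems(1) insert.hyps by simp
    hence "g dvd (\<Prod>k\<in>K. [:- c k, 1:])" by (rule dvd_linear_cancel) (use insert.prems(2) in simp)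
    then show ?case using insert.IH insert.prems(2) by simp
  qed
qed

lemma mpC_add: "map_poly (\<lambda>c. [:c:]) (p + q) = map_poly (\<lambda>c. [:c:]) p + map_poly (\<lambda>c. [:c:]) q"
  by (intro poly_eqI) (simp add: coeff_map_poly)

lemma mpC_smult: "map_poly (\<lambda>c. [:c:]) (smult a q) = smult [:a:] (map_poly (\<lambda>c. [:c:]) (q :: 'a::comm_ring_1 poly))"
  by (rule map_poly_smult) (simp_all add: mult.commute)

lemma mpC_mult: "map_poly (\<lambda>c. [:c:]) (p * q) = map_poly (\<lambda>c. [:c:]) p * map_poly (\<lambda>c. [:c:]) (q :: 'a::comm_ring_1 poly)"
proof (induction p)
  case 0 then show ?case by simp
next
  case (pCons a p)
  show ?case
    by (simp add: mpC_add mpC_smult map_poly_pCons pCons.IH)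
qed

lemma mpC_prod: "map_poly (\<lambda>c. [:c:]) (\<Prod>k\<in>K. f k) = (\<Prod>k\<in>K. map_poly (\<lambda>c. [:c:]) (f k :: 'a::comm_ring_1 poly))"
  by (induction K rule: infinite_finite_induct) (simp_all add: mpC_mult)

definition zeta :: "nat \<Rightarrow> nat \<Rightarrow> complex" where "zeta m k = cis (2 * pi * real k / real m)"

lemma cycloQ_prod: "cycloQ m = (\<Prod>k\<in>{k. k < m \<and> coprime k m}. [:- [:zeta m k:], 1:])"
  unfolding cycloQ_def cyclo_def mpC_prod zeta_def
  by (rule prod.cong) (simp_all add: map_poly_pCons)

lemma zeta_pow: "m > 0 \<Longrightarrow> zeta m k ^ m = 1"
  by (simp add: zeta_def DeMoivre)

lemma zeta_nz: "zeta m k \<noteq> 0"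
  by (simp add: zeta_def)

lemma zeta_inj: assumes "m > 0" shows "inj_on (zeta m) {..<m}"
proof (rule inj_onI)
  fix a b assume a: "a \<in> {..<m}" and b: "b \<in> {..<m}" and e: "zeta m a = zeta m b"
  have "cis (2 * pi * real a / real m - 2 * pi * real b / real m) = 1"
    using e by (simp add: zeta_def cis_divide[symmetric])
  hence "cos (2 * pi * real a / real m - 2 * pi * real b / real m) = 1"
    by (metis cis.simps(1) one_complex.simps(1))
  then obtain n :: int where n: "2 * pi * real a / real m - 2 * pi * real b / real m = real_of_int n * (2 * pi)"
    by (auto simp: cos_one_2pi_int)
  hence "pi * (real a * 2) = pi * (real b * 2) + pi * (real_of_int n * (real m * 2))" using assms by (simp add: field_simps)
  hence "pi * (2 * (real a - real b - real_of_int n * real m)) = 0" by (simp add: algebra_simps)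
  hence "real a - real b = real_of_int n * real m" by simp
  hence "int a - int b = n * int m" by (metis of_int_eq_iff of_int_diff of_int_mult of_int_of_nat_eq)
  moreover have "\<bar>int a - int b\<bar> < int m" using a b by auto
  ultimately have "\<bar>n\<bar> * int m < 1 * int m" by (simp add: abs_mult)
  hence "\<bar>n\<bar> < 1" by (rule mult_right_less_imp_less) simp
  hence "n = 0" by simp
  thus "a = b" using \<open>int a - int b = n * int m\<close> by simp
qed


lemma qpoch_qp: "qpoch = qp"
  by (simp add: fun_eq_iff qpoch_def qp_def)

lemma Fract_const_pow: "Fract [:z:] 1 ^ n = Fract [:z ^ n:] (1 :: complex poly)"
  by (induction n) (simp_all add: One_fract_def pCons_one mult.commute)

lemma Fract_const_powi:
  assumes "z \<noteq> 0" shows "Fract [:z:] 1 powi i = Fract [:z powi i:] (1 :: complex poly)"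
proof -
  have inv: "inverse (Fract [:z:] (1 :: complex poly)) = Fract [:inverse z:] 1"
    using assms by (simp add: eq_fract)
  show ?thesis
    unfolding power_int_def inv Fract_const_pow
    by (cases "0 \<le> i") simp_all
qed

lemma alpha_ne_const: "Fract [:0, 1:] 1 \<noteq> Fract [:c:] (1 :: complex poly)"
  by (simp add: eq_fract)

lemma finish:
  assumes m0: "m > 0" and h: "hv (zeta m ` {k. k < m \<and> coprime k m}) x V"
    and V0: "\<forall>z\<in>zeta m ` {k. k < m \<and> coprime k m}. V z = 0"
  shows "\<exists>N D. D \<noteq> 0 \<and> x = Fract N D \<and> coprime D (cycloQ m) \<and> cycloQ m dvd N"
proof -
  define K where "K = {k. k < m \<and> coprime k m}"
  from h obtain N D where ND: "D \<noteq> 0" "x = Fract N D"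
    "\<forall>z\<in>zeta m ` K. ev z D \<noteq> 0 \<and> V z = Fract (ev z N) (ev z D)"
    unfolding hv_def K_def by blast
  have Dk: "\<forall>k\<in>K. poly D [:zeta m k:] \<noteq> 0" using ND(3) by (auto simp: ev_def)
  have Nk: "\<forall>k\<in>K. poly N [:zeta m k:] = 0"
    using ND(3) V0 unfolding K_def[symmetric] by (auto simp: ev_def Fract_eq_0_iff)
  have fin: "finite K" unfolding K_def by simp
  have inj: "inj_on (\<lambda>k. [:zeta m k:]) K"
  proof (rule inj_onI)
    fix a b assume "a \<in> K" "b \<in> K" "[:zeta m a:] = [:zeta m b:]"
    then show "a = b" using zeta_inj[OF m0] unfolding K_def inj_on_def by auto
  qed
  have "coprime D (cycloQ m)"
    unfolding cycloQ_prod K_def[symmetric] by (rule coprime_prod_roots[OF fin Dk])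
  moreover have "cycloQ m dvd N"
    unfolding cycloQ_prod K_def[symmetric] by (rule dvd_prod_roots[OF fin inj Nk])
  ultimately show ?thesis using ND by blast
qed

theorem lemma1:
  fixes d t :: int and m s k :: nat
  assumes "d \<ge> 2" and "m > 1" and "s \<le> m - 1"
    and "gcd d t = 1"
    and "[d * int s = - t] (mod int m)"
    and "k \<le> s"
  shows "cong_cyclo
     (qpoch (avar * qvar powi t) (qvar powi d) (s - k) / qpoch (qvar powi d / avar) (qvar powi d) (s - k))
     ((- avar) powi (int s - 2 * int k)
        * qvar powi (int s * (d * int s - d + 2 * t) div 2 + (d - t) * int k)
        * (qpoch (avar * qvar powi t) (qvar powi d) k / qpoch (qvar powi d / avar) (qvar powi d) k))
     m"
proof -
  define P where "P = zeta m ` {k. k < m \<and> coprime k m}"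
  define \<alpha> :: "complex poly fract" where "\<alpha> = Fract [:0, 1:] 1"
  define Z :: "complex \<Rightarrow> complex poly fract" where "Z z = Fract [:z:] 1" for z
  have m0: "m > 0" using assms(2) by simp
  have Pnz: "z \<noteq> 0" if "z \<in> P" for z using that zeta_nz unfolding P_def by auto
  have Pm: "z ^ m = 1" if "z \<in> P" for z using that zeta_pow[OF m0] unfolding P_def by auto
  have Znz: "Z z \<noteq> 0" if "z \<in> P" for z using Pnz[OF that] by (simp add: Z_def Fract_eq_0_iff)
  have a0: "\<alpha> \<noteq> 0" by (simp add: \<alpha>_def Fract_eq_0_iff)
  have aZ: "\<forall>i. \<alpha> \<noteq> Z z powi i" if "z \<in> P" for z
    using Pnz[OF that] by (simp add: Z_def Fract_const_powi \<alpha>_def alpha_ne_const)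
  have Zm: "Z z ^ m = 1" if "z \<in> P" for z
    using Pm[OF that] by (simp add: Z_def Fract_const_pow One_fract_def pCons_one)
  have hq: "hv P qvar Z" unfolding qvar_def
    by (rule hv_cong[OF hv_const[of P "[:0, 1:]"]]) (simp add: Z_def ev_def qvar_def)
  have ha: "hv P avar (\<lambda>z. \<alpha>)" unfolding avar_def
    by (rule hv_cong[OF hv_const[of P "[:[:0, 1:]:]"]]) (simp_all add: \<alpha>_def ev_def avar_def)
  have hB: "hv P (qvar powi d) (\<lambda>z. Z z powi d)" by (rule hv_powi[OF hq]) (use Znz in blast)
  have hX: "hv P (avar * qvar powi t) (\<lambda>z. \<alpha> * Z z powi t)"
    by (rule hv_mult[OF ha hv_powi[OF hq]]) (use Znz in blast)
  have hY: "hv P (qvar powi d / avar) (\<lambda>z. Z z powi d / \<alpha>)"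
    by (rule hv_divide[OF hB ha]) (use a0 in blast)
  have den: "\<forall>z\<in>P. qp (Z z powi d / \<alpha>) (Z z powi d) n \<noteq> 0" for n
  proof
    fix z assume z: "z \<in> P"
    have "\<forall>j. \<alpha> \<noteq> (Z z powi d) ^ j" using aZ[OF z] by (simp add: power_int_power')
    then show "qp (Z z powi d / \<alpha>) (Z z powi d) n \<noteq> 0" by (rule qp_den_nz[OF a0])
  qed
  have hL: "hv P (qpoch (avar * qvar powi t) (qvar powi d) (s - k) / qpoch (qvar powi d / avar) (qvar powi d) (s - k))
     (\<lambda>z. qp (\<alpha> * Z z powi t) (Z z powi d) (s - k) / qp (Z z powi d / \<alpha>) (Z z powi d) (s - k))"
    unfolding qpoch_qp by (rule hv_divide[OF hv_qp[OF hX hB] hv_qp[OF hY hB] den])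
  have hR: "hv P ((- avar) powi (int s - 2 * int k)
        * qvar powi (int s * (d * int s - d + 2 * t) div 2 + (d - t) * int k)
        * (qpoch (avar * qvar powi t) (qvar powi d) k / qpoch (qvar powi d / avar) (qvar powi d) k))
     (\<lambda>z. (- \<alpha>) powi (int s - 2 * int k) * Z z powi (int s * (d * int s - d + 2 * t) div 2 + (d - t) * int k)
        * (qp (\<alpha> * Z z powi t) (Z z powi d) k / qp (Z z powi d / \<alpha>) (Z z powi d) k))"
    unfolding qpoch_qp
    by (intro hv_mult hv_powi hv_minus ha hq hv_divide[OF hv_qp[OF hX hB] hv_qp[OF hY hB] den])
       (use a0 Znz in auto)
  have hD: "hv P (qpoch (avar * qvar powi t) (qvar powi d) (s - k) / qpoch (qvar powi d / avar) (qvar powi d) (s - k)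
     - (- avar) powi (int s - 2 * int k)
        * qvar powi (int s * (d * int s - d + 2 * t) div 2 + (d - t) * int k)
        * (qpoch (avar * qvar powi t) (qvar powi d) k / qpoch (qvar powi d / avar) (qvar powi d) k)) (\<lambda>z. 0)"
  proof (rule hv_cong[OF hv_diff[OF hL hR]])
    fix z assume z: "z \<in> P"
    show "qp (\<alpha> * Z z powi t) (Z z powi d) (s - k) / qp (Z z powi d / \<alpha>) (Z z powi d) (s - k) -
        (- \<alpha>) powi (int s - 2 * int k) * Z z powi (int s * (d * int s - d + 2 * t) div 2 + (d - t) * int k)
        * (qp (\<alpha> * Z z powi t) (Z z powi d) k / qp (Z z powi d / \<alpha>) (Z z powi d) k) = 0"
      using field_main[OF Znz[OF z] Zm[OF z] a0 aZ[OF z] assms(5) assms(6)] by simp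
  qed
  show ?thesis
    unfolding cong_cyclo_def
    by (rule finish[OF m0 hD[unfolded P_def]]) simp
qed

end
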